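(* Let $z_n=(0,1/n)$, $n\in\mathbb{N}$, $O=(0,0)$, $K=\{z_n\}_{n\in\mathbb{N}}\cup\{O\}$, $Z=\mathbb{R}^2\setminus K$, and let $\Delta$ be the foliation of $Z$ whose leaves are the connected components of the intersections of $Z$ with horizontal lines $\mathbb{R}\times\{y\}$. Then every leaf of $\Delta$ admits a cross-section through it, but the family of special leaves of $\Delta$ is not locally finite. Consequently there is no striped atlas on $Z$ whose canonical foliation is $\Delta$.
   Context: For a leaf $\omega$ of a foliation $\Delta$ on a surface $Z$, let $J_\omega=[0,1)$ if $\omega\subset\partial Z$ and $J_\omega=(-1,1)$ otherwise; a cross-section through $\omega$ is a continuous map $\gamma:J_\omega\to Z$ with $\gamma(0)\in\omega$ such that $\gamma(s),\gamma(t)$ lie in distinct leaves for $s\ne t$. A subset is saturated if it is a union of leaves; $\hat\omega$ is the intersection of the closures of all saturated neighbourhoods of $\omega$; $\omega$ is special if $\omega\ne\hat\omega$. A striped atlas is a quotient map $q$ from an at most countable disjoint union of strips (sets $S$ with $\mathbb{R}\times(u,v)\subset S\subset\mathbb{R}\times[u,v]$ open in $\mathbb{R}\times[u,v]$) onto $Z$, gluing pairs $X_\gamma,Y_\gamma$ of mutually distinct boundary intervals (components of $S\cap(\mathbb{R}\times\{u,v\})$) via $q(X_\gamma)=q(Y_\gamma)$, injective elsewhere, with $q|_{X_\gamma},q|_{Y_\gamma}$ embeddings with closed images; its canonical foliation has as leaves the images of horizontal lines and boundary intervals of the strips. *)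

theory Defs
  imports "HOL-Analysis.Analysis"
begin

text \<open>A foliation on a surface Z (a subset of the plane with the subspace topology)
  is represented by its set of leaves L, a partition of Z.\<close>

definition surface_boundary :: "(real \<times> real) set \<Rightarrow> (real \<times> real) set" where
  "surface_boundary Z = {x \<in> Z. \<not> (\<exists>U V. openin (top_of_set Z) U \<and> x \<in> U \<and>
        open (V :: (real \<times> real) set) \<and> U homeomorphic V)}"

definition cross_interval :: "(real \<times> real) set \<Rightarrow> (real \<times> real) set \<Rightarrow> real set" where
  "cross_interval Z \<omega> = (if \<omega> \<subseteq> surface_boundary Z then {0..<1} else {-1<..<1})"

definition cross_section ::
  "(real \<times> real) set \<Rightarrow> (real \<times> real) set set \<Rightarrow> (real \<times> real) set \<Rightarrow> (real \<Rightarrow> real \<times> real) \<Rightarrow> bool" where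
  "cross_section Z L \<omega> \<gamma> \<longleftrightarrow>
     continuous_on (cross_interval Z \<omega>) \<gamma> \<and> \<gamma> ` cross_interval Z \<omega> \<subseteq> Z \<and>
     \<gamma> 0 \<in> \<omega> \<and>
     (\<forall>s \<in> cross_interval Z \<omega>. \<forall>t \<in> cross_interval Z \<omega>. s \<noteq> t \<longrightarrow>
        \<not> (\<exists>l\<in>L. \<gamma> s \<in> l \<and> \<gamma> t \<in> l))"

definition saturated :: "(real \<times> real) set set \<Rightarrow> (real \<times> real) set \<Rightarrow> bool" where
  "saturated L A \<longleftrightarrow> (\<exists>F \<subseteq> L. A = \<Union>F)"

definition saturated_nbhd ::
  "(real \<times> real) set \<Rightarrow> (real \<times> real) set set \<Rightarrow> (real \<times> real) set \<Rightarrow> (real \<times> real) set \<Rightarrow> bool" where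
  "saturated_nbhd Z L \<omega> N \<longleftrightarrow> saturated L N \<and>
     (\<exists>U. openin (top_of_set Z) U \<and> \<omega> \<subseteq> U \<and> U \<subseteq> N)"

definition leaf_hat ::
  "(real \<times> real) set \<Rightarrow> (real \<times> real) set set \<Rightarrow> (real \<times> real) set \<Rightarrow> (real \<times> real) set" where
  "leaf_hat Z L \<omega> = \<Inter> {top_of_set Z closure_of N | N. saturated_nbhd Z L \<omega> N}"

definition special_leaf ::
  "(real \<times> real) set \<Rightarrow> (real \<times> real) set set \<Rightarrow> (real \<times> real) set \<Rightarrow> bool" where
  "special_leaf Z L \<omega> \<longleftrightarrow> \<omega> \<noteq> leaf_hat Z L \<omega>"

definition strip :: "real \<Rightarrow> real \<Rightarrow> (real \<times> real) set \<Rightarrow> bool" where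
  "strip u v S \<longleftrightarrow> u < v \<and>
     {p. u < snd p \<and> snd p < v} \<subseteq> S \<and> S \<subseteq> {p. u \<le> snd p \<and> snd p \<le> v} \<and>
     openin (top_of_set {p :: real \<times> real. u \<le> snd p \<and> snd p \<le> v}) S"

definition boundary_intervals :: "real \<Rightarrow> real \<Rightarrow> (real \<times> real) set \<Rightarrow> (real \<times> real) set set" where
  "boundary_intervals u v S = components (S \<inter> {p. snd p = u \<or> snd p = v})"

text \<open>The disjoint union of the strips S i, i in I (I at most countable), is the subset
  Sigma I S of nat x R^2 (nat carries the discrete topology). G is the set of glued pairs
  (X_gamma, Y_gamma) of boundary intervals, viewed as subsets of the disjoint union.\<close>

definition striped_atlas ::
  "nat set \<Rightarrow> (nat \<Rightarrow> real) \<Rightarrow> (nat \<Rightarrow> real) \<Rightarrow> (nat \<Rightarrow> (real \<times> real) set) \<Rightarrow>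
   ((nat \<times> (real \<times> real)) set \<times> (nat \<times> (real \<times> real)) set) set \<Rightarrow>
   (nat \<times> (real \<times> real) \<Rightarrow> real \<times> real) \<Rightarrow> (real \<times> real) set \<Rightarrow> bool" where
  "striped_atlas I u v S G q Z \<longleftrightarrow>
     (\<forall>i\<in>I. strip (u i) (v i) (S i)) \<and>
     (\<forall>(A, B)\<in>G.
        (\<exists>i\<in>I. \<exists>X\<in>boundary_intervals (u i) (v i) (S i). A = {i} \<times> X) \<and>
        (\<exists>j\<in>I. \<exists>Y\<in>boundary_intervals (u j) (v j) (S j). B = {j} \<times> Y) \<and> A \<noteq> B) \<and>
     (\<forall>g\<in>G. \<forall>g'\<in>G. g \<noteq> g' \<longrightarrow> {fst g, snd g} \<inter> {fst g', snd g'} = {}) \<and>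
     quotient_map (top_of_set (Sigma I S)) (top_of_set Z) q \<and>
     (\<forall>(A, B)\<in>G. q ` A = q ` B \<and>
        embedding_map (top_of_set A) (top_of_set Z) q \<and>
        embedding_map (top_of_set B) (top_of_set Z) q \<and>
        closedin (top_of_set Z) (q ` A) \<and> closedin (top_of_set Z) (q ` B)) \<and>
     inj_on q (Sigma I S - \<Union> {A \<union> B | A B. (A, B) \<in> G})"

definition canonical_foliation ::
  "nat set \<Rightarrow> (nat \<Rightarrow> real) \<Rightarrow> (nat \<Rightarrow> real) \<Rightarrow> (nat \<Rightarrow> (real \<times> real) set) \<Rightarrow>
   (nat \<times> (real \<times> real) \<Rightarrow> real \<times> real) \<Rightarrow> (real \<times> real) set set" where
  "canonical_foliation I u v S q =
     {q ` ({i} \<times> (UNIV \<times> {t})) | i t. i \<in> I \<and> u i < t \<and> t < v i} \<union>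
     {q ` ({i} \<times> X) | i X. i \<in> I \<and> X \<in> boundary_intervals (u i) (v i) (S i)}"

definition Kset :: "(real \<times> real) set" where
  "Kset = {(0, 1 / real n) | n. n \<ge> 1} \<union> {(0, 0)}"

definition Zset :: "(real \<times> real) set" where
  "Zset = UNIV - Kset"

definition Delta :: "(real \<times> real) set set" where
  "Delta = {connected_component_set (Zset \<inter> {p. snd p = snd z}) z | z. z \<in> Zset}"

end

theory Submission
  imports Defs "HOL-Homology.Invariance_of_Domain"
begin

definition gen :: "real \<Rightarrow> bool" where
  "gen c \<longleftrightarrow> c \<noteq> 0 \<and> (\<forall>j::nat. j \<ge> 1 \<longrightarrow> c \<noteq> 1 / real j)"

lemma K1: "p \<in> Kset \<Longrightarrow> fst p = 0 \<and> \<not> gen (snd p)"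
  unfolding Kset_def gen_def by auto

lemma K2: "fst p \<noteq> 0 \<Longrightarrow> p \<in> Zset"
  unfolding Zset_def using K1[of p] by blast

lemma K3: "(0, 0) \<notin> Zset" "n \<ge> 1 \<Longrightarrow> (0, 1 / real n) \<notin> Zset"
  unfolding Zset_def Kset_def by auto

lemma K4: "gen c \<Longrightarrow> (x, c) \<in> Zset"
  unfolding Zset_def using K1 by fastforce

lemma gen_exists:
  fixes a b :: real assumes "a < b" shows "\<exists>c. a < c \<and> c < b \<and> gen c"
proof -
  have "countable (insert 0 (range (\<lambda>j::nat. 1 / real j)))" by simp
  moreover have "uncountable {a<..<b}" using assms uncountable_open_interval by blast
  ultimately obtain c where "c \<in> {a<..<b}" "c \<notin> insert 0 (range (\<lambda>j::nat. 1 / real j))"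
    by (metis countable_subset subsetI)
  then show ?thesis unfolding gen_def by auto
qed

lemma D1:
  assumes "l \<in> Delta" "p \<in> l"
  shows "l = connected_component_set (Zset \<inter> {q. snd q = snd p}) p" "p \<in> Zset"
    "l \<subseteq> Zset \<inter> {q. snd q = snd p}"
proof -
  obtain z where z: "z \<in> Zset" "l = connected_component_set (Zset \<inter> {p. snd p = snd z}) z"
    using assms(1) unfolding Delta_def by auto
  have sub: "l \<subseteq> Zset \<inter> {p. snd p = snd z}" using z connected_component_subset by metis
  then have "snd p = snd z" using assms by auto
  then show "l = connected_component_set (Zset \<inter> {q. snd q = snd p}) p"
    using z assms connected_component_eq by metis
  show "p \<in> Zset" using sub assms by auto
  show "l \<subseteq> Zset \<inter> {q. snd q = snd p}" using sub \<open>snd p = snd z\<close> by auto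
qed

lemma D6: "z \<in> Zset \<Longrightarrow> connected_component_set (Zset \<inter> {p. snd p = snd z}) z \<in> Delta"
  unfolding Delta_def by blast

lemma D6b: "z \<in> Zset \<Longrightarrow> z \<in> connected_component_set (Zset \<inter> {p. snd p = snd z}) z"
  by (simp add: connected_component_refl_eq)

lemma D3:
  assumes "l \<in> Delta" "p \<in> l" "gen (snd p)"
  shows "(x, snd p) \<in> l"
proof -
  have "connected (range (\<lambda>x::real. (x, snd p)))"
    by (intro connected_continuous_image continuous_intros) auto
  moreover have "range (\<lambda>x::real. (x, snd p)) \<subseteq> Zset \<inter> {q. snd q = snd p}"
    using K4 assms(3) by auto
  moreover have "p \<in> range (\<lambda>x::real. (x, snd p))"
    by (metis prod.collapse rangeI)
  ultimately have "connected_component (Zset \<inter> {q. snd q = snd p}) p (x, snd p)"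
    by (intro connected_componentI[of "range (\<lambda>x::real. (x, snd p))"]) auto
  then show ?thesis using D1[OF assms(1,2)] by (simp add: mem_Collect_eq)
qed

lemma D4:
  assumes "l \<in> Delta" "p \<in> l" "fst p > 0" "(0, snd p) \<notin> Zset" "p' \<in> l"
  shows "fst p' > 0"
proof (rule ccontr)
  assume "\<not> fst p' > 0"
  have "connected l" using D1(1)[OF assms(1,2)] by (metis connected_connected_component)
  then have "connected (fst ` l)" by (intro connected_continuous_image continuous_intros)
  then have "0 \<in> fst ` l"
    using assms \<open>\<not> fst p' > 0\<close> connected_iff_interval[of "fst ` l"]
    by (metis image_eqI less_eq_real_def not_less)
  then obtain p'' where "p'' \<in> l" "fst p'' = 0" by auto
  moreover have "snd p'' = snd p" using D1(3)[OF assms(1,2)] \<open>p'' \<in> l\<close> by auto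
  ultimately have "(0, snd p) \<in> Zset" using D1(3)[OF assms(1,2)] by (metis IntE prod.collapse subsetD)
  then show False using assms(4) by simp
qed

lemma D5:
  assumes "l \<in> Delta" "l' \<in> Delta" "p \<in> l" "p' \<in> l'" "snd p' = snd p" "fst p > 0" "fst p' > 0"
    "(0, snd p) \<notin> Zset"
  shows "l = l'"
proof -
  let ?R = "(\<lambda>x::real. (x, snd p)) ` {0<..}"
  have "connected ?R" by (intro connected_continuous_image continuous_intros) auto
  moreover have "?R \<subseteq> Zset \<inter> {q. snd q = snd p}" using K2 by auto
  moreover have "p \<in> ?R" using assms by (metis greaterThan_iff image_eqI prod.collapse)
  moreover have "p' \<in> ?R" using assms by (metis greaterThan_iff image_eqI prod.collapse)
  ultimately have "connected_component (Zset \<inter> {q. snd q = snd p}) p p'"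
    by (intro connected_componentI) 
  then have "connected_component_set (Zset \<inter> {q. snd q = snd p}) p' = connected_component_set (Zset \<inter> {q. snd q = snd p}) p"
    by (simp add: connected_component_eq mem_Collect_eq)
  then show ?thesis using D1(1)[OF assms(1,3)] D1(1)[OF assms(2,4)] assms(5) by simp
qed



lemma dist_same_fst: "dist (x::real, y1::real) (x, y2) = dist y1 y2"
  by (simp add: dist_Pair_Pair)

lemma part1: "\<forall>\<omega>\<in>Delta. \<exists>\<gamma>. cross_section Zset Delta \<omega> \<gamma>"
proof
  fix \<omega> assume om: "\<omega> \<in> Delta"
  then obtain z where z: "z \<in> Zset" "\<omega> = connected_component_set (Zset \<inter> {p. snd p = snd z}) z"
    unfolding Delta_def by blast
  have zin: "z \<in> \<omega>" using z D6b by simp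
  obtain p where p: "p \<in> \<omega>" "fst p \<noteq> 0"
  proof (cases "fst z = 0")
    case True
    have "z \<notin> Kset" using z unfolding Zset_def by auto
    then have "gen (snd z)" using True unfolding Kset_def gen_def
      by (metis (mono_tags, lifting) Un_iff insertI1 mem_Collect_eq prod.collapse)
    then have "(1, snd z) \<in> \<omega>" using D3[OF om zin] by simp
    then show ?thesis using that by fastforce
  next
    case False then show ?thesis using that zin by blast
  qed
  define \<gamma> where "\<gamma> = (\<lambda>s::real. (fst p, snd p + s))"
  have c1: "continuous_on (cross_interval Zset \<omega>) \<gamma>" unfolding \<gamma>_def by (intro continuous_intros)
  have c2: "\<gamma> ` cross_interval Zset \<omega> \<subseteq> Zset" unfolding \<gamma>_def using K2 p by auto
  have c3: "\<gamma> 0 \<in> \<omega>" unfolding \<gamma>_def using p by simp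
  have c4: "\<not> (\<exists>l\<in>Delta. \<gamma> s \<in> l \<and> \<gamma> t \<in> l)" if "s \<noteq> t" for s t :: real
  proof
    assume "\<exists>l\<in>Delta. \<gamma> s \<in> l \<and> \<gamma> t \<in> l"
    then obtain l where "l \<in> Delta" "\<gamma> s \<in> l" "\<gamma> t \<in> l" by blast
    then have "snd (\<gamma> t) = snd (\<gamma> s)" using D1(3) by blast
    then show False using \<open>s \<noteq> t\<close> unfolding \<gamma>_def by simp
  qed
  have "cross_section Zset Delta \<omega> \<gamma>"
    unfolding cross_section_def using c1 c2 c3 c4 by blast
  then show "\<exists>\<gamma>. cross_section Zset Delta \<omega> \<gamma>" by blast
qed

definition om :: "nat \<Rightarrow> (real \<times> real) set" where
  "om n = connected_component_set (Zset \<inter> {p. snd p = snd (1::real, 1 / real n)}) (1, 1 / real n)"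

lemma om_basic:
  shows "om n \<in> Delta" "(1, 1 / real n) \<in> om n" "om n \<subseteq> {p. snd p = 1 / real n}"
proof -
  have z: "(1::real, 1 / real n) \<in> Zset" using K2 by simp
  show "om n \<in> Delta" unfolding om_def by (rule D6[OF z])
  show "(1, 1 / real n) \<in> om n" unfolding om_def by (rule D6b[OF z])
  show "om n \<subseteq> {p. snd p = 1 / real n}" unfolding om_def using connected_component_subset by fastforce
qed

lemma om_special:
  assumes "n \<ge> 1" shows "special_leaf Zset Delta (om n)"
proof -
  have notin: "(-1, 1 / real n) \<notin> om n"
  proof
    assume "(-1, 1 / real n) \<in> om n"
    then have "fst (-1::real, 1 / real n) > 0"
      using D4[OF om_basic(1)[of n] om_basic(2)[of n], of "(-1, 1 / real n)"] K3(2)[OF assms] by simp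
    then show False by simp
  qed
  have inhat: "(-1, 1 / real n) \<in> leaf_hat Zset Delta (om n)"
    unfolding leaf_hat_def
  proof (rule InterI, clarify)
    fix N assume sn: "saturated_nbhd Zset Delta (om n) N"
    then obtain F where F: "F \<subseteq> Delta" "N = \<Union>F" unfolding saturated_nbhd_def saturated_def by blast
    obtain U where U: "openin (top_of_set Zset) U" "om n \<subseteq> U" "U \<subseteq> N"
      using sn unfolding saturated_nbhd_def by blast
    obtain O' where O': "open O'" "U = Zset \<inter> O'" using U(1) openin_open by blast
    have "(1, 1 / real n) \<in> O'" using U(2) O' om_basic(2) by blast
    then obtain e2 where e2: "e2 > 0" "ball (1, 1 / real n) e2 \<subseteq> O'" using O'(1) open_contains_ball by blast
    show "(-1, 1 / real n) \<in> top_of_set Zset closure_of N"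
      unfolding in_closure_of
    proof (intro conjI allI impI)
      show "(-1, 1 / real n) \<in> topspace (top_of_set Zset)" using K2 by simp
      fix T assume T: "(-1, 1 / real n) \<in> T \<and> openin (top_of_set Zset) T"
      obtain Op where Op: "open Op" "T = Zset \<inter> Op" using T openin_open by blast
      have "(-1, 1 / real n) \<in> Op" using Op T by blast
      then obtain e1 where e1: "e1 > 0" "ball (-1, 1 / real n) e1 \<subseteq> Op" using Op(1) open_contains_ball by blast
      obtain c where c: "1 / real n < c" "c < 1 / real n + min e1 e2" "gen c"
        using gen_exists[of "1 / real n" "1 / real n + min e1 e2"] e1 e2 by auto
      have "(1, c) \<in> ball (1, 1 / real n) e2" using c by (simp add: dist_Pair_Pair dist_real_def)
      then have "(1, c) \<in> U" using e2 O' K2[of "(1,c)"] by auto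
      then have "(1, c) \<in> N" using U by blast
      then obtain l where l: "l \<in> F" "(1, c) \<in> l" using F by blast
      then have "(-1, c) \<in> l" using D3[of l "(1,c)" "-1"] F c by auto
      then have "(-1, c) \<in> N" using F l by blast
      moreover have "(-1, c) \<in> ball (-1, 1 / real n) e1" using c by (simp add: dist_Pair_Pair dist_real_def)
      then have "(-1, c) \<in> T" using e1 Op K2[of "(-1,c)"] by auto
      ultimately show "\<exists>y. y \<in> N \<and> y \<in> T" by blast
    qed
  qed
  show ?thesis unfolding special_leaf_def using notin inhat by blast
qed

lemma part2: "\<not> locally_finite_in (top_of_set Zset) {\<omega> \<in> Delta. special_leaf Zset Delta \<omega>}"
proof
  assume lf: "locally_finite_in (top_of_set Zset) {\<omega> \<in> Delta. special_leaf Zset Delta \<omega>}"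
  have "(1::real, 0::real) \<in> topspace (top_of_set Zset)" using K2 by simp
  then obtain V where V: "openin (top_of_set Zset) V" "(1, 0) \<in> V"
    "finite {U \<in> {\<omega> \<in> Delta. special_leaf Zset Delta \<omega>}. U \<inter> V \<noteq> {}}"
    using lf unfolding locally_finite_in_def by blast
  obtain Op where Op: "open Op" "V = Zset \<inter> Op" using V(1) openin_open by blast
  then obtain e where e: "e > 0" "ball (1, 0) e \<subseteq> Op" using V(2) open_contains_ball by blast
  obtain N0 :: nat where N0: "0 < N0" "inverse (real N0) < e" using e(1) ex_inverse_of_nat_less by blast
  define N where "N = N0 - 1"
  have N: "inverse (real (Suc N)) < e" using N0 unfolding N_def by simp
  have sub: "om ` {Suc N..} \<subseteq> {U \<in> {\<omega> \<in> Delta. special_leaf Zset Delta \<omega>}. U \<inter> V \<noteq> {}}"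
  proof
    fix x assume "x \<in> om ` {Suc N..}"
    then obtain n where n: "n \<in> {Suc N..}" and xn: "x = om n" by blast
    have "1 / real n \<le> inverse (real (Suc N))" using n by (simp add: divide_simps)
    moreover have "1 / real n > 0" using n by simp
    ultimately have "(1, 1 / real n) \<in> ball (1, 0) e" using N by (simp add: dist_Pair_Pair dist_real_def)
    then have "(1, 1 / real n) \<in> V" using Op e K2 by auto
    then have "(1, 1 / real n) \<in> om n \<inter> V" using om_basic(2) by blast
    moreover have "n \<ge> 1" using n by simp
    ultimately show "x \<in> {U \<in> {\<omega> \<in> Delta. special_leaf Zset Delta \<omega>}. U \<inter> V \<noteq> {}}"
      using om_basic(1) om_special xn by blast
  qed
  have "inj_on om {Suc N..}"
  proof (rule inj_onI)
    fix m n assume "m \<in> {Suc N..}" "n \<in> {Suc N..}" "om m = om n"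
    then have "(1, 1 / real m) \<in> om n" using om_basic(2) by metis
    then have "1 / real m = 1 / real n" using om_basic(3)[of n] by force
    then show "m = n" by simp
  qed
  then have "infinite (om ` {Suc N..})" using finite_imageD infinite_Ici by blast
  then show False using sub V(3) finite_subset by blast
qed



lemma dist_same_fst': "dist (x::real, y1::real) (x, y2) = dist y1 y2"
  by (simp add: dist_Pair_Pair)

locale atl_loc =
  fixes I u v S G q
  assumes atl: "striped_atlas I u v S G q Zset"
    and can: "canonical_foliation I u v S q = Delta"
begin

definition intr :: "nat \<Rightarrow> real \<times> real \<Rightarrow> bool" where
  "intr i x \<longleftrightarrow> i \<in> I \<and> u i < snd x \<and> snd x < v i"

lemma quo: "quotient_map (top_of_set (Sigma I S)) (top_of_set Zset) q"
  by (rule atl[unfolded striped_atlas_def, THEN conjunct2, THEN conjunct2, THEN conjunct2, THEN conjunct1])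

lemma qcont: "continuous_on (Sigma I S) q"
  using quotient_imp_continuous_map[OF quo] by simp

lemma qimg: "q ` Sigma I S = Zset"
  using quotient_imp_surjective_map[OF quo] by simp

lemma stripI: "i \<in> I \<Longrightarrow> strip (u i) (v i) (S i)"
  using atl[unfolded striped_atlas_def, THEN conjunct1] by blast

lemma intr_in: "intr i x \<Longrightarrow> x \<in> S i"
  using stripI unfolding intr_def strip_def by blast

lemma S_band: "i \<in> I \<Longrightarrow> x \<in> S i \<Longrightarrow> u i \<le> snd x \<and> snd x \<le> v i"
  using stripI unfolding strip_def by blast

lemma uv: "i \<in> I \<Longrightarrow> u i < v i"
  using stripI unfolding strip_def by blast

lemma S_open:
  assumes "i \<in> I" "x \<in> S i"
  shows "\<exists>r>0. \<forall>y. dist y x < r \<and> u i \<le> snd y \<and> snd y \<le> v i \<longrightarrow> y \<in> S i"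
proof -
  have "openin (top_of_set {p :: real \<times> real. u i \<le> snd p \<and> snd p \<le> v i}) (S i)"
    using stripI[OF assms(1)] unfolding strip_def by blast
  then obtain T where T: "open T" "S i = {p. u i \<le> snd p \<and> snd p \<le> v i} \<inter> T"
    using openin_open by blast
  then obtain r where r: "r > 0" "ball x r \<subseteq> T" using assms(2) open_contains_ball by blast
  show ?thesis
  proof (intro exI[of _ r] conjI allI impI)
    show "r > 0" by fact
    fix y assume y: "dist y x < r \<and> u i \<le> snd y \<and> snd y \<le> v i"
    then have "y \<in> T" using r(2) by (auto simp: dist_commute)
    then show "y \<in> S i" using T y by auto
  qed
qed

lemma intr_notglued:
  assumes "intr i x"
  shows "(i, x) \<in> Sigma I S - \<Union> {A \<union> B | A B. (A, B) \<in> G}"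
proof -
  have "(i, x) \<in> Sigma I S" using assms intr_in intr_def by auto
  moreover have "(i, x) \<notin> A \<union> B" if "(A, B) \<in> G" for A B
  proof -
    have g2: "\<forall>(A, B)\<in>G.
        (\<exists>i\<in>I. \<exists>X\<in>boundary_intervals (u i) (v i) (S i). A = {i} \<times> X) \<and>
        (\<exists>j\<in>I. \<exists>Y\<in>boundary_intervals (u j) (v j) (S j). B = {j} \<times> Y) \<and> A \<noteq> B"
      by (rule atl[unfolded striped_atlas_def, THEN conjunct2, THEN conjunct1])
    from bspec[OF g2 that] have "(\<exists>i\<in>I. \<exists>X\<in>boundary_intervals (u i) (v i) (S i). A = {i} \<times> X) \<and>
        (\<exists>j\<in>I. \<exists>Y\<in>boundary_intervals (u j) (v j) (S j). B = {j} \<times> Y)"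
      by simp
    then obtain i' X j' Y where X: "i' \<in> I" "X \<in> boundary_intervals (u i') (v i') (S i')" "A = {i'} \<times> X"
      and Y: "j' \<in> I" "Y \<in> boundary_intervals (u j') (v j') (S j')" "B = {j'} \<times> Y"
      by blast
    have s1: "X \<subseteq> {p. snd p = u i' \<or> snd p = v i'}" using X(2) unfolding boundary_intervals_def
      using in_components_subset by blast
    have s2: "Y \<subseteq> {p. snd p = u j' \<or> snd p = v j'}" using Y(2) unfolding boundary_intervals_def
      using in_components_subset by blast
    show ?thesis
    proof
      assume "(i, x) \<in> A \<union> B"
      then have "(i = i' \<and> x \<in> X) \<or> (i = j' \<and> x \<in> Y)" using X(3) Y(3) by blast
      then have "snd x = u i \<or> snd x = v i" using s1 s2 by blast
      then show False using assms unfolding intr_def by auto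
    qed
  qed
  ultimately show ?thesis by blast
qed

lemma qinj:
  assumes "intr i x" "intr j y" "q (i, x) = q (j, y)"
  shows "i = j \<and> x = y"
proof -
  have "inj_on q (Sigma I S - \<Union> {A \<union> B | A B. (A, B) \<in> G})"
    by (rule atl[unfolded striped_atlas_def, THEN conjunct2, THEN conjunct2, THEN conjunct2, THEN conjunct2, THEN conjunct2])
  from inj_onD[OF this assms(3) intr_notglued[OF assms(1)] intr_notglued[OF assms(2)]]
  show ?thesis by simp
qed

lemma qk_cont: "i \<in> I \<Longrightarrow> continuous_on (S i) (\<lambda>x. q (i, x))"
  by (rule continuous_on_compose2[OF qcont, of "S i" "\<lambda>x. (i, x)"]) (auto intro: continuous_intros)

lemma qk_open:
  assumes "i \<in> I" "open D" "D \<subseteq> {x. u i < snd x \<and> snd x < v i}"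
  shows "open ((\<lambda>x. q (i, x)) ` D)"
proof (rule invariance_of_domain)
  have "D \<subseteq> S i" using assms intr_in unfolding intr_def by auto
  then show "continuous_on D (\<lambda>x. q (i, x))" using qk_cont[OF assms(1)] continuous_on_subset by blast
  show "open D" by fact
  show "inj_on (\<lambda>x. q (i, x)) D"
  proof (rule inj_onI)
    fix x y assume "x \<in> D" "y \<in> D" "q (i, x) = q (i, y)"
    then have "intr i x" "intr i y" using assms unfolding intr_def by auto
    then show "x = y" using qinj \<open>q (i, x) = q (i, y)\<close> by blast
  qed
qed

definition line :: "nat \<Rightarrow> real \<Rightarrow> (real \<times> real) set" where
  "line i t = q ` ({i} \<times> (UNIV \<times> {t}))"

lemma line_Delta: "i \<in> I \<Longrightarrow> u i < t \<Longrightarrow> t < v i \<Longrightarrow> line i t \<in> Delta"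
  unfolding line_def using can[symmetric] unfolding canonical_foliation_def by blast

lemma line_mem: "q (i, x) \<in> line i (snd x)"
  unfolding line_def by (metis SigmaI UNIV_I imageI prod.collapse singletonI)

lemma line_memE:
  assumes "p \<in> line i t" obtains a where "p = q (i, (a, t))"
  using assms unfolding line_def by auto

lemma lemG:
  assumes "intr j x" "(k, y) \<in> Sigma I S" "\<not> intr k y" "q (k, y) = q (j, x)"
  shows False
proof -
  have jI: "j \<in> I" and kI: "k \<in> I" "y \<in> S k" using assms unfolding intr_def by auto
  define \<rho> where "\<rho> = min (snd x - u j) (v j - snd x) / 2"
  have \<rho>: "\<rho> > 0" using assms(1) unfolding \<rho>_def intr_def by simp
  have Dsub: "ball x \<rho> \<subseteq> {z. u j < snd z \<and> snd z < v j}"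
  proof
    fix z assume "z \<in> ball x \<rho>"
    then have h: "\<bar>snd z - snd x\<bar> < \<rho>" using dist_snd_le[of z x] by (simp add: dist_commute dist_real_def)
    have "\<rho> \<le> (snd x - u j) / 2" "\<rho> \<le> (v j - snd x) / 2" unfolding \<rho>_def by auto
    then show "z \<in> {z. u j < snd z \<and> snd z < v j}" using h \<rho> by (auto simp: abs_less_iff)
  qed
  have W: "open ((\<lambda>z. q (j, z)) ` ball x \<rho>)" using qk_open[OF jI _ Dsub] by simp
  have "q (j, x) \<in> (\<lambda>z. q (j, z)) ` ball x \<rho>" using \<rho> by simp
  then obtain \<epsilon> where \<epsilon>: "\<epsilon> > 0" "ball (q (j, x)) \<epsilon> \<subseteq> (\<lambda>z. q (j, z)) ` ball x \<rho>"
    using W open_contains_ball by blast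
  obtain \<delta> where \<delta>: "\<delta> > 0" "\<forall>y'\<in>S k. dist y' y < \<delta> \<longrightarrow> dist (q (k, y')) (q (k, y)) < \<epsilon>"
    using qk_cont[OF kI(1)] kI(2) \<epsilon>(1) unfolding continuous_on_iff by blast
  have yb: "snd y = u k \<or> snd y = v k" using S_band[OF kI] assms(3) kI(1) unfolding intr_def by auto
  define t where "t = min (min \<delta> \<rho>) (v k - u k) / 2"
  have t: "t > 0" "t < \<delta>" "t < \<rho>" "t < v k - u k" using \<delta> \<rho> uv[OF kI(1)] unfolding t_def by auto
  define y' where "y' = (if snd y = u k then (fst y, snd y + t) else (fst y, snd y - t))"
  have iy': "intr k y'" using yb t kI(1) uv[OF kI(1)] unfolding y'_def intr_def by auto
  have "dist y' y = t" unfolding y'_def using t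
    by (cases y) (auto simp: dist_Pair_Pair dist_real_def)
  then have "dist (q (k, y')) (q (j, x)) < \<epsilon>" using \<delta> t intr_in[OF iy'] assms(4) by auto
  then have "q (k, y') \<in> (\<lambda>z. q (j, z)) ` ball x \<rho>" using \<epsilon> by (auto simp: dist_commute)
  then obtain x' where x': "x' \<in> ball x \<rho>" "q (k, y') = q (j, x')" by blast
  have "intr j x'" using x' Dsub jI unfolding intr_def by auto
  then have "k = j" "y' = x'" using qinj[OF iy' _ x'(2)] by auto
  then have "dist (snd y') (snd x) < \<rho>" using x' dist_snd_le[of x' x] by (simp add: dist_commute)
  then show False using yb t \<open>k = j\<close> assms(1) unfolding y'_def \<rho>_def dist_real_def intr_def
    by (auto split: if_splits)
qed

lemma fiber:
  assumes "intr k x" "g \<in> Sigma I S" "q g = q (k, x)"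
  shows "g = (k, x)"
proof -
  obtain j y where Pair: "g = (j, y)" by (cases g)
  show ?thesis
  proof (cases "intr j y")
    case True then show ?thesis using qinj[OF True assms(1)] assms Pair by simp
  next
    case False then show ?thesis using lemG[OF assms(1) _ False] assms Pair by simp
  qed
qed

lemma H1:
  assumes "A \<subseteq> Sigma I S" "w \<in> Sigma I S" "w \<in> closure A" "closed F" "\<forall>p\<in>A. q p \<in> F"
  shows "q w \<in> F"
proof -
  have "closedin (top_of_set (Sigma I S)) (Sigma I S \<inter> q -` F)"
    using continuous_closedin_preimage[OF qcont assms(4)] .
  then obtain T where T: "closed T" "Sigma I S \<inter> q -` F = Sigma I S \<inter> T" using closedin_closed by metis
  have "A \<subseteq> T" using assms(1,5) T(2) by blast
  then have "closure A \<subseteq> T" using T(1) closure_minimal by blast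
  then show ?thesis using assms(2,3) T(2) by blast
qed

lemma H2:
  assumes "C \<subseteq> Zset" "P \<in> Zset" "P \<in> closure C" "P \<notin> C"
  shows "\<exists>w\<in>Sigma I S. w \<in> closure (Sigma I S \<inter> q -` C) \<and> q w \<notin> C"
proof (rule ccontr)
  assume H: "\<not> ?thesis"
  have "\<not> closedin (top_of_set Zset) C"
  proof
    assume "closedin (top_of_set Zset) C"
    then obtain T where "closed T" "C = Zset \<inter> T" using closedin_closed by metis
    then show False using assms closure_minimal[of C T] by blast
  qed
  moreover have "closedin (top_of_set (Sigma I S)) {x \<in> topspace (top_of_set (Sigma I S)). q x \<in> C}"
  proof -
    have "{x \<in> topspace (top_of_set (Sigma I S)). q x \<in> C} = Sigma I S \<inter> closure (Sigma I S \<inter> q -` C)"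
    proof (intro equalityI subsetI)
      fix x assume "x \<in> {x \<in> topspace (top_of_set (Sigma I S)). q x \<in> C}"
      then show "x \<in> Sigma I S \<inter> closure (Sigma I S \<inter> q -` C)" using closure_subset by fastforce
    next
      fix x assume x: "x \<in> Sigma I S \<inter> closure (Sigma I S \<inter> q -` C)"
      then have "q x \<in> C" using H by blast
      then show "x \<in> {x \<in> topspace (top_of_set (Sigma I S)). q x \<in> C}" using x by simp
    qed
    then show ?thesis by (simp add: closedin_closed_Int)
  qed
  ultimately show False using quo assms(1) unfolding quotient_map_closedin by simp
qed

end



lemma testlin: "(d::real) < r \<Longrightarrow> 0 \<le> d \<Longrightarrow> (r - d)/2 < r" by argo

lemma TL:
  fixes X :: "nat \<Rightarrow> real"
  assumes "\<forall>m. \<bar>X m - L\<bar> < 1 / (real m + 1)"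
  shows "X \<longlonglongrightarrow> L"
proof (rule LIMSEQ_I)
  fix r :: real assume "r > 0"
  then obtain N0 :: nat where N0: "0 < N0" "inverse (real N0) < r" using ex_inverse_of_nat_less by blast
  show "\<exists>no. \<forall>n\<ge>no. norm (X n - L) < r"
  proof (intro exI allI impI)
    fix n assume "N0 \<le> n"
    then have "1 / (real n + 1) \<le> inverse (real N0)" using N0 by (simp add: divide_simps)
    then show "norm (X n - L) < r" using assms[rule_format, of n] N0 by simp
  qed
qed

context atl_loc
begin

lemma ray:
  fixes z1 z2 :: "real \<times> real"
  assumes kI: "k \<in> I" and n: "n \<ge> 1"
    and gdef: "\<gamma> = (\<lambda>\<tau>::real. (1 - \<tau>) *\<^sub>R z1 + \<tau> *\<^sub>R z2)"
    and gam: "\<forall>\<tau>\<in>{0..1}. intr k (\<gamma> \<tau>) \<and> fst (q (k, \<gamma> \<tau>)) > 0"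
    and sz: "snd z1 \<noteq> snd z2"
    and t0: "\<tau>0 \<in> {0..1}" "snd (q (k, \<gamma> \<tau>0)) = 1 / real n"
  shows False
proof -
  define F where "F = (\<lambda>\<tau>. snd (q (k, \<gamma> \<tau>)))"
  have gcont: "continuous_on {0..1} \<gamma>" unfolding gdef by (intro continuous_intros)
  have qgcont: "continuous_on {0..1} (\<lambda>\<tau>. q (k, \<gamma> \<tau>))"
    by (rule continuous_on_compose2[OF qk_cont[OF kI] gcont]) (use gam intr_in in blast)
  have Fc: "continuous_on {0..1} F" unfolding F_def using qgcont by (intro continuous_intros)
  have sgam: "snd (\<gamma> \<tau>) = (1 - \<tau>) * snd z1 + \<tau> * snd z2" for \<tau> unfolding gdef by simp
  have sinj: "a = b" if "snd (\<gamma> a) = snd (\<gamma> b)" for a b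
  proof -
    have "(a - b) * (snd z2 - snd z1) = 0" using that unfolding sgam by (simp add: algebra_simps)
    then show ?thesis using sz by simp
  qed
  define p0 where "p0 = q (k, \<gamma> \<tau>0)"
  define s0 where "s0 = snd (\<gamma> \<tau>0)"
  have i0: "intr k (\<gamma> \<tau>0)" using gam t0 by blast
  have L0: "line k s0 \<in> Delta" using i0 line_Delta unfolding intr_def s0_def by blast
  have p0L: "p0 \<in> line k s0" unfolding p0_def s0_def by (rule line_mem)
  have p0f: "fst p0 > 0" "snd p0 = 1 / real n" using gam t0 unfolding p0_def by auto
  have K0: "(0, snd p0) \<notin> Zset" using K3(2)[OF n] p0f by simp
  have st2: "\<exists>\<tau>'\<in>{0..1}. \<bar>\<tau>' - \<tau>0\<bar> < 1 / (real m + 1) \<and> F \<tau>' \<noteq> 1 / real n" for m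
  proof (rule ccontr)
    assume H: "\<not> ?thesis"
    define d where "d = 1 / (2 * (real m + 1))"
    have d: "d > 0" "d \<le> 1/2" "d < 1 / (real m + 1)" unfolding d_def by (auto simp: divide_simps)
    define \<tau>' where "\<tau>' = (if \<tau>0 \<le> 1/2 then \<tau>0 + d else \<tau>0 - d)"
    have t': "\<tau>' \<in> {0..1}" "\<bar>\<tau>' - \<tau>0\<bar> < 1 / (real m + 1)" "\<tau>' \<noteq> \<tau>0"
      using d t0(1) unfolding \<tau>'_def by auto
    have Ft': "F \<tau>' = 1 / real n" using H t' by blast
    define p' where "p' = q (k, \<gamma> \<tau>')"
    have i': "intr k (\<gamma> \<tau>')" using gam t' by blast
    have L': "line k (snd (\<gamma> \<tau>')) \<in> Delta" using i' line_Delta unfolding intr_def by blast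
    have p'L: "p' \<in> line k (snd (\<gamma> \<tau>'))" unfolding p'_def by (rule line_mem)
    have p'f: "fst p' > 0" "snd p' = 1 / real n" using gam t' Ft' unfolding p'_def F_def by auto
    have "line k s0 = line k (snd (\<gamma> \<tau>'))"
      by (rule D5[OF L0 L' p0L p'L]) (use p0f p'f K0 in auto)
    then have "p' \<in> line k s0" using p'L by simp
    then obtain a where a: "p' = q (k, (a, s0))" by (rule line_memE)
    have "intr k (a, s0)" using i0 unfolding intr_def s0_def by simp
    then have "\<gamma> \<tau>' = (a, s0)" using qinj[OF i'] a unfolding p'_def by blast
    then have "snd (\<gamma> \<tau>') = snd (\<gamma> \<tau>0)" unfolding s0_def by simp
    then show False using sinj t' by blast
  qed
  have st3: "\<exists>\<tau>''\<in>{0..1}. \<bar>\<tau>'' - \<tau>0\<bar> < 1 / (real m + 1) \<and> gen (F \<tau>'') \<and>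
      \<bar>F \<tau>'' - 1 / real n\<bar> < 1 / (real m + 1)" for m
  proof -
    obtain \<tau>' where t': "\<tau>' \<in> {0..1}" "\<bar>\<tau>' - \<tau>0\<bar> < 1 / (real m + 1)" "F \<tau>' \<noteq> 1 / real n"
      using st2 by blast
    have F0: "F \<tau>0 = 1 / real n" using t0 unfolding F_def by simp
    have pos: "1 / (real m + 1) > 0" by simp
    obtain c where c: "gen c" "\<bar>c - 1 / real n\<bar> < 1 / (real m + 1)" "c \<in> closed_segment (F \<tau>0) (F \<tau>')"
    proof (cases "F \<tau>' > 1 / real n")
      case True
      obtain c where "1 / real n < c" "c < min (F \<tau>') (1 / real n + 1 / (real m + 1))" "gen c"
        using gen_exists[of "1 / real n" "min (F \<tau>') (1 / real n + 1 / (real m + 1))"] True pos by auto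
      then show ?thesis using that F0 True by (auto simp: closed_segment_eq_real_ivl)
    next
      case False
      then have Fl: "F \<tau>' < 1 / real n" using t'(3) by simp
      obtain c where "max (F \<tau>') (1 / real n - 1 / (real m + 1)) < c" "c < 1 / real n" "gen c"
        using gen_exists[of "max (F \<tau>') (1 / real n - 1 / (real m + 1))" "1 / real n"] Fl pos by auto
      then show ?thesis using that F0 Fl by (auto simp: closed_segment_eq_real_ivl)
    qed
    have segsub: "closed_segment \<tau>0 \<tau>' \<subseteq> {0..1}" using t0(1) t'(1)
      by (auto simp: closed_segment_eq_real_ivl split: if_splits)
    obtain \<tau>'' where t'': "\<tau>'' \<in> closed_segment \<tau>0 \<tau>'" "F \<tau>'' = c"
      using IVT'_closed_segment_real[OF c(3) continuous_on_subset[OF Fc segsub]] by blast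
    have "\<bar>\<tau>'' - \<tau>0\<bar> \<le> \<bar>\<tau>' - \<tau>0\<bar>" using t''(1)
      by (auto simp: closed_segment_eq_real_ivl split: if_splits)
    then show ?thesis using t'' c segsub t' by (intro bexI[of _ \<tau>'']) auto
  qed
  obtain T where T: "\<forall>m. T m \<in> {0..1} \<and> \<bar>T m - \<tau>0\<bar> < 1 / (real m + 1) \<and> gen (F (T m)) \<and>
      \<bar>F (T m) - 1 / real n\<bar> < 1 / (real m + 1)"
    using st3 by metis
  define s where "s = (\<lambda>m. snd (\<gamma> (T m)))"
  define c where "c = (\<lambda>m. F (T m))"
  have iT: "intr k (\<gamma> (T m))" for m using gam T by blast
  have ex_a: "\<exists>a. q (k, (a, s m)) = (-1, c m)" for m
  proof -
    have Lm: "line k (s m) \<in> Delta" using iT[of m] line_Delta unfolding intr_def s_def by blast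
    have pm: "q (k, \<gamma> (T m)) \<in> line k (s m)" unfolding s_def by (rule line_mem)
    have "gen (snd (q (k, \<gamma> (T m))))" using T unfolding F_def by blast
    then have "(-1, snd (q (k, \<gamma> (T m)))) \<in> line k (s m)" using D3[OF Lm pm] by blast
    then obtain a where "(-1, c m) = q (k, (a, s m))" unfolding c_def F_def by (auto elim: line_memE)
    then show ?thesis by metis
  qed
  obtain A where A: "\<forall>m. q (k, (A m, s m)) = (-1, c m)" using ex_a by metis
  have iA: "intr k (A m, s m)" for m using iT[of m] unfolding intr_def s_def by simp
  have Tlim: "T \<longlonglongrightarrow> \<tau>0" using T by (intro TL) blast
  have slim: "s \<longlonglongrightarrow> s0" unfolding s_def s0_def sgam using Tlim by (intro tendsto_intros)
  have clim: "c \<longlonglongrightarrow> 1 / real n" unfolding c_def using T by (intro TL) blast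
  have cne: "c m \<noteq> 1 / real n" for m using T n unfolding c_def gen_def by blast
  define C where "C = range (\<lambda>m. (-1::real, c m))"
  have CZ: "C \<subseteq> Zset" unfolding C_def using K2 by auto
  have PZ: "(-1::real, 1 / real n) \<in> Zset" using K2 by simp
  have Pcl: "(-1::real, 1 / real n) \<in> closure C" unfolding closure_sequential C_def
    by (rule exI[of _ "\<lambda>m. (-1, c m)"]) (auto intro!: tendsto_intros clim)
  have PnC: "(-1::real, 1 / real n) \<notin> C"
  proof
    assume "(-1::real, 1 / real n) \<in> C"
    then obtain m where "(-1::real, 1 / real n) = (-1, c m)" unfolding C_def by blast
    then show False using cne[of m] by simp
  qed
  obtain w where w: "w \<in> Sigma I S" "w \<in> closure (Sigma I S \<inter> q -` C)" "q w \<notin> C"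
    using H2[OF CZ PZ Pcl PnC] by blast
  define Cl where "Cl = {k} \<times> ((UNIV :: real set) \<times> insert s0 (range s))"
  have clCl: "closed Cl" unfolding Cl_def
    by (intro closed_Times closed_singleton closed_UNIV compact_imp_closed compact_sequence_with_limit slim)
  have PsubCl: "Sigma I S \<inter> q -` C \<subseteq> Cl"
  proof
    fix g assume g: "g \<in> Sigma I S \<inter> q -` C"
    then obtain m where "q g = (-1, c m)" unfolding C_def by auto
    then have "q g = q (k, (A m, s m))" using A by simp
    then have "g = (k, (A m, s m))" using fiber[OF iA] g by blast
    then show "g \<in> Cl" unfolding Cl_def by simp
  qed
  have "w \<in> Cl" using w(2) closure_minimal[OF PsubCl clCl] by blast
  then obtain x where wx: "w = (k, x)" "snd x = s0 \<or> snd x \<in> range s" unfolding Cl_def by auto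
  have fstw: "q w \<in> {p. fst p = -1}"
  proof (rule H1[OF _ w(1) w(2)])
    show "closed {p :: real \<times> real. fst p = -1}" by (intro closed_Collect_eq continuous_intros)
    show "\<forall>p\<in>Sigma I S \<inter> q -` C. q p \<in> {p. fst p = -1}" unfolding C_def by auto
  qed auto
  have xS: "x \<in> S k" using w(1) wx by simp
  from wx(2) show False
  proof
    assume "snd x = s0"
    then have "q w \<in> line k s0" unfolding wx using line_mem by metis
    then have "fst (q w) > 0" using D4[OF L0 p0L p0f(1) K0] by blast
    then show False using fstw by simp
  next
    assume "snd x \<in> range s"
    then obtain m where m: "snd x = s m" by blast
    have Lm: "line k (s m) \<in> Delta" using iA[of m] line_Delta unfolding intr_def by simp
    have "q w \<in> line k (s m)" unfolding wx using line_mem m by metis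
    moreover have "(-1, c m) \<in> line k (s m)" using A line_mem[of k "(A m, s m)"] by simp
    ultimately have "snd (q w) = c m" using D1(3)[OF Lm] by fastforce
    then have "q w = (-1, c m)" using fstw by (simp add: prod_eq_iff)
    then show False using w(3) unfolding C_def by auto
  qed
qed

lemma noatlas: False
proof -
  define C0 where "C0 = range (\<lambda>m::nat. (1::real, 1 / real (Suc m)))"
  have C0Z: "C0 \<subseteq> Zset" unfolding C0_def using K2 by auto
  have lim0: "(\<lambda>m::nat. (1::real, 1 / real (Suc m))) \<longlonglongrightarrow> (1, 0)"
    using LIMSEQ_inverse_real_of_nat by (intro tendsto_intros) (simp add: inverse_eq_divide)
  have P0Z: "(1::real, 0::real) \<in> Zset" using K2 by simp
  have P0cl: "(1::real, 0::real) \<in> closure C0" unfolding closure_sequential C0_def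
    using lim0 by (intro exI[of _ "\<lambda>m::nat. (1::real, 1 / real (Suc m))"]) auto
  have P0n: "(1::real, 0::real) \<notin> C0" unfolding C0_def by auto
  obtain w where w: "w \<in> Sigma I S" "w \<in> closure (Sigma I S \<inter> q -` C0)" "q w \<notin> C0"
    using H2[OF C0Z P0Z P0cl P0n] by blast
  have "q w \<in> insert (1, 0) C0"
  proof (rule H1[OF _ w(1) w(2)])
    show "closed (insert (1, 0) C0)" unfolding C0_def
      by (intro compact_imp_closed compact_sequence_with_limit lim0)
  qed auto
  then have qw: "q w = (1, 0)" using w(3) by simp
  obtain k xw where wk: "w = (k, xw)" by (cases w)
  have kI: "k \<in> I" and xS: "xw \<in> S k" using w(1) wk by auto
  have uvk: "u k < v k" using uv[OF kI] .
  have cq: "\<forall>x\<in>S k. \<forall>\<epsilon>>0. \<exists>\<delta>>0. \<forall>x'\<in>S k. dist x' x < \<delta> \<longrightarrow> dist (q (k, x')) (q (k, x)) < \<epsilon>"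
    using qk_cont[OF kI] unfolding continuous_on_iff .
  obtain r1 where r1: "r1 > 0" "\<forall>y. dist y xw < r1 \<and> u k \<le> snd y \<and> snd y \<le> v k \<longrightarrow> y \<in> S k"
    using S_open[OF kI xS] by blast
  obtain r2 where r2: "r2 > 0" "\<forall>x'\<in>S k. dist x' xw < r2 \<longrightarrow> dist (q (k, x')) (q (k, xw)) < 1/2"
    using cq xS by (meson zero_less_divide_1_iff zero_less_numeral)
  define r where "r = min r1 r2"
  have r: "r > 0" "r \<le> r1" "r \<le> r2" using r1 r2 unfolding r_def by auto
  have "open ({k} \<times> ball xw r)" by (intro open_Times open_discrete open_ball)
  moreover have "w \<in> ({k} \<times> ball xw r) \<inter> closure (Sigma I S \<inter> q -` C0)" using w wk r by simp
  ultimately have "({k} \<times> ball xw r) \<inter> (Sigma I S \<inter> q -` C0) \<noteq> {}"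
    using open_Int_closure_eq_empty by blast
  then obtain g where g: "g \<in> {k} \<times> ball xw r" "g \<in> Sigma I S" "q g \<in> C0" by blast
  then obtain y where gy: "g = (k, y)" by blast
  have y: "dist xw y < r" "y \<in> S k" "q (k, y) \<in> C0" using g gy by auto
  then obtain m0 where qy: "q (k, y) = (1, 1 / real (Suc m0))" unfolding C0_def by auto
  define e where "e = 1 / real (Suc m0)"
  define n where "n = Suc (Suc m0)"
  have n1: "n \<ge> 1" unfolding n_def by simp
  have ne: "1 / real n < e" "1 / real n > 0" unfolding n_def e_def by (auto simp: divide_simps)
  obtain \<delta>1 where \<delta>1: "\<delta>1 > 0" "\<forall>x'\<in>S k. dist x' xw < \<delta>1 \<longrightarrow> dist (q (k, x')) (q (k, xw)) < 1 / real n"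
    using cq xS ne(2) by blast
  obtain \<delta>2 where \<delta>2: "\<delta>2 > 0" "\<forall>x'\<in>S k. dist x' y < \<delta>2 \<longrightarrow> dist (q (k, x')) (q (k, y)) < e - 1 / real n"
    using cq y(2) ne(1) by (meson diff_gt_0_iff_gt)
  define \<delta> where "\<delta> = min (min (\<delta>1 / 2) (\<delta>2 / 2)) (min ((v k - u k) / 4) ((r - dist y xw) / 2))"
  have \<delta>: "\<delta> > 0" "\<delta> < \<delta>1" "\<delta> < \<delta>2" "\<delta> \<le> (v k - u k) / 4" "\<delta> \<le> (r - dist y xw) / 2"
  proof -
    have d: "dist y xw < r" using y(1) by (simp add: dist_commute)
    show "\<delta> > 0" using \<delta>1 \<delta>2 uvk d unfolding \<delta>_def by auto
    have "\<delta> \<le> \<delta>1 / 2" "\<delta> \<le> \<delta>2 / 2" "\<delta> \<le> (v k - u k) / 4" "\<delta> \<le> (r - dist y xw) / 2"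
      unfolding \<delta>_def
      by (rule min.coboundedI1[OF min.cobounded1], rule min.coboundedI1[OF min.cobounded2],
          rule min.coboundedI2[OF min.cobounded1], rule min.coboundedI2[OF min.cobounded2])
    then show "\<delta> < \<delta>1" "\<delta> < \<delta>2" "\<delta> \<le> (v k - u k) / 4" "\<delta> \<le> (r - dist y xw) / 2"
      using \<delta>1(1) \<delta>2(1) by argo+
  qed
  define push where "push = (\<lambda>z::real\<times>real. (fst z, max (u k + \<delta>) (min (v k - \<delta>) (snd z))))"
  have pushl: "dist (push z) z \<le> \<delta> \<and> u k < snd (push z) \<and> snd (push z) < v k"
    if "u k \<le> snd z" "snd z \<le> v k" for z
  proof -
    have "dist (push z) z = \<bar>max (u k + \<delta>) (min (v k - \<delta>) (snd z)) - snd z\<bar>"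
      unfolding push_def by (cases z) (simp add: dist_Pair_Pair dist_real_def)
    also have "\<dots> \<le> \<delta>" using that \<delta> by (auto simp: max_def min_def)
    finally show ?thesis using that \<delta> uvk unfolding push_def by (auto simp: max_def min_def)
  qed
  define z1 where "z1 = push xw"
  define z2 where "z2 = push y"
  have bx: "u k \<le> snd xw" "snd xw \<le> v k" using S_band[OF kI xS] by auto
  have byy: "u k \<le> snd y" "snd y \<le> v k" using S_band[OF kI y(2)] by auto
  have z1p: "dist z1 xw \<le> \<delta>" "u k < snd z1" "snd z1 < v k" using pushl[OF bx] unfolding z1_def by auto
  have z2p: "dist z2 y \<le> \<delta>" "u k < snd z2" "snd z2 < v k" using pushl[OF byy] unfolding z2_def by auto
  have dyx: "dist y xw < r" "0 \<le> dist y xw" using y(1) by (auto simp: dist_commute)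
  have dr: "\<delta> < r"
  proof -
    have "(r - dist y xw) / 2 < r" using testlin[OF dyx] .
    then show ?thesis using \<delta>(5) by simp
  qed
  have z1r: "dist z1 xw < r" using z1p(1) dr by simp
  have z2r: "dist z2 xw < r" using z2p(1) \<delta>(5) dyx dist_triangle[of z2 xw y] by simp
  define \<gamma> where "\<gamma> = (\<lambda>\<tau>::real. (1 - \<tau>) *\<^sub>R z1 + \<tau> *\<^sub>R z2)"
  have gS: "\<gamma> \<tau> \<in> S k \<and> intr k (\<gamma> \<tau>) \<and> dist (\<gamma> \<tau>) xw < r" if "\<tau> \<in> {0..1}" for \<tau>
  proof -
    have "\<gamma> \<tau> \<in> ball xw r" unfolding \<gamma>_def
      using that z1r z2r by (intro convexD[OF convex_ball]) (auto simp: dist_commute)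
    moreover have "snd (\<gamma> \<tau>) = (1 - \<tau>) * snd z1 + \<tau> * snd z2" unfolding \<gamma>_def by simp
    moreover have "(1 - \<tau>) * snd z1 + \<tau> * snd z2 < v k"
      using that z1p z2p by (intro convex_bound_lt) auto
    moreover have "(1 - \<tau>) * (- snd z1) + \<tau> * (- snd z2) < - u k"
      using that z1p z2p by (intro convex_bound_lt) auto
    ultimately have "intr k (\<gamma> \<tau>)" "dist (\<gamma> \<tau>) xw < r" using kI unfolding intr_def
      by (auto simp: dist_commute algebra_simps)
    then show ?thesis using intr_in by blast
  qed
  have gam: "\<forall>\<tau>\<in>{0..1}. intr k (\<gamma> \<tau>) \<and> fst (q (k, \<gamma> \<tau>)) > 0"
  proof
    fix \<tau> :: real assume t: "\<tau> \<in> {0..1}"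
    have "dist (q (k, \<gamma> \<tau>)) (q (k, xw)) < 1/2" using r2(2) gS[OF t] r by auto
    then have "dist (fst (q (k, \<gamma> \<tau>))) 1 < 1/2" using dist_fst_le[of "q (k, \<gamma> \<tau>)" "q (k, xw)"] qw wk by simp
    then have "\<bar>fst (q (k, \<gamma> \<tau>)) - 1\<bar> < 1/2" by (simp add: dist_real_def)
    moreover have "- (fst (q (k, \<gamma> \<tau>)) - 1) \<le> \<bar>fst (q (k, \<gamma> \<tau>)) - 1\<bar>" by (rule abs_ge_minus_self)
    ultimately have "fst (q (k, \<gamma> \<tau>)) > 0" by argo
    then show "intr k (\<gamma> \<tau>) \<and> fst (q (k, \<gamma> \<tau>)) > 0" using gS[OF t] by blast
  qed
  have F1: "snd (q (k, z1)) < 1 / real n"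
  proof -
    have "z1 \<in> S k" using gS[of 0] unfolding \<gamma>_def by simp
    then have "dist (q (k, z1)) (q (k, xw)) < 1 / real n" using \<delta>1 z1p \<delta> by auto
    then have "dist (snd (q (k, z1))) 0 < 1 / real n" using dist_snd_le[of "q (k, z1)" "q (k, xw)"] qw wk by simp
    then show ?thesis by (simp add: dist_real_def)
  qed
  have F2: "snd (q (k, z2)) > 1 / real n"
  proof -
    have "z2 \<in> S k" using gS[of 1] unfolding \<gamma>_def by simp
    then have "dist (q (k, z2)) (q (k, y)) < e - 1 / real n" using \<delta>2 z2p \<delta> by auto
    then have "dist (snd (q (k, z2))) e < e - 1 / real n" using dist_snd_le[of "q (k, z2)" "q (k, y)"] qy e_def by simp
    then show ?thesis by (simp add: dist_real_def)
  qed
  have gcont: "continuous_on {0..1} \<gamma>" unfolding \<gamma>_def by (intro continuous_intros)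
  have qgcont: "continuous_on {0..1} (\<lambda>\<tau>. q (k, \<gamma> \<tau>))"
    by (rule continuous_on_compose2[OF qk_cont[OF kI] gcont]) (use gS in blast)
  have Fc: "continuous_on {0..1} (\<lambda>\<tau>. snd (q (k, \<gamma> \<tau>)))" using qgcont by (intro continuous_intros)
  have g01: "\<gamma> 0 = z1" "\<gamma> 1 = z2" unfolding \<gamma>_def by auto
  obtain \<tau>0 where t0: "0 \<le> \<tau>0" "\<tau>0 \<le> 1" "snd (q (k, \<gamma> \<tau>0)) = 1 / real n"
    using IVT'[of "\<lambda>\<tau>. snd (q (k, \<gamma> \<tau>))" 0 "1 / real n" 1] Fc F1 F2 g01 by auto
  have sz: "snd z1 \<noteq> snd z2"
  proof
    assume eq: "snd z1 = snd z2"
    have i1: "intr k z1" using gS[of 0] g01 by simp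
    have L: "line k (snd z1) \<in> Delta" using i1 line_Delta unfolding intr_def by blast
    have "q (k, z1) \<in> line k (snd z1)" by (rule line_mem)
    moreover have "q (k, z2) \<in> line k (snd z1)" using eq line_mem by metis
    ultimately have "snd (q (k, z2)) = snd (q (k, z1))" using D1(3)[OF L] by blast
    then show False using F1 F2 by simp
  qed
  show False by (rule ray[OF kI n1 \<gamma>_def gam sz _ t0(3)]) (use t0 in simp)
qed

end


theorem mainTheorem9:
  shows "(\<forall>\<omega>\<in>Delta. \<exists>\<gamma>. cross_section Zset Delta \<omega> \<gamma>) \<and>
         \<not> locally_finite_in (top_of_set Zset) {\<omega> \<in> Delta. special_leaf Zset Delta \<omega>} \<and>
         \<not> (\<exists>I u v S G q. striped_atlas I u v S G q Zset \<and> canonical_foliation I u v S q = Delta)"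
proof (intro conjI)
  show "\<forall>\<omega>\<in>Delta. \<exists>\<gamma>. cross_section Zset Delta \<omega> \<gamma>" by (rule part1)
  show "\<not> locally_finite_in (top_of_set Zset) {\<omega> \<in> Delta. special_leaf Zset Delta \<omega>}" by (rule part2)
  show "\<not> (\<exists>I u v S G q. striped_atlas I u v S G q Zset \<and> canonical_foliation I u v S q = Delta)"
  proof
    assume "\<exists>I u v S G q. striped_atlas I u v S G q Zset \<and> canonical_foliation I u v S q = Delta"
    then obtain I u v S G q where h: "striped_atlas I u v S G q Zset" "canonical_foliation I u v S q = Delta"
      by blast
    have "atl_loc I u v S G q" unfolding atl_loc_def using h by blast
    then show False by (rule atl_loc.noatlas)
  qed
qed

end
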